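(* Let $A\ge 3$, $N\ge 2$, and let $w:\mathbf{Prof}\to\mathbf{Pref}$ be a social welfare function satisfying IIA with pairwise comparison functions $s_1,\dots,s_A:\{0,e,1\}^N\to\{0,e,1\}$, and satisfying Unanimity. If $w$ satisfies Unrestricted Domain, then for every $j\in\{1,\dots,A\}$ and every $r\in\{0,1\}^N$ we have $s_j(r)\in\{0,1\}$.
   Context: Let $\mathcal{A}=\{a_1,\dots,a_A\}$ and $N\ge 2$ individuals; $e$ is a third symbol distinct from $0,1$. Let $\sigma(i)=i+1$ for $i<A$, $\sigma(A)=1$. A preference relation is $t\in\{0,e,1\}^A$, where $t_i$ records $a_i$ versus $a_{\sigma(i)}$: $0$ means $a_i\prec a_{\sigma(i)}$, $1$ means $a_{\sigma(i)}\prec a_i$, $e$ means $a_i\sim a_{\sigma(i)}$. It corresponds to a weak order if some complete transitive relation on $\mathcal{A}$ realizes all these comparisons; otherwise it is a preference cycle. $\mathbf{Pref}=\{0,e,1\}^A$. A profile is an $A\times N$ matrix over $\{0,e,1\}$ whose every column corresponds to a weak order; $\mathbf{Prof}$ is the set of profiles, written in row form $(r_1,\dots,r_A)$ with $r_j\in\{0,e,1\}^N$ (row $j$ lists all individuals' comparisons of $a_j$ versus $a_{\sigma(j)}$). A social welfare function is a map $w:\mathbf{Prof}\to\mathbf{Pref}$. It satisfies IIA if there are functions $s_1,\dots,s_A:\{0,e,1\}^N\to\{0,e,1\}$ (pairwise comparison functions) with $w(r_1,\dots,r_A)=(s_1(r_1),\dots,s_A(r_A))$ for every profile. It satisfies Unanimity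 if $s_j(\Delta x)=x$ for all $j$ and $x\in\{0,1\}$, where $\Delta x=(x,\dots,x)\in\{0,e,1\}^N$. It satisfies Unrestricted Domain if $w(m)$ corresponds to a weak order for every profile $m$. *)

theory Defs
  imports Main
begin

datatype cmp = Zero | E | One

text \<open>Alternatives are indexed 0..A-1 (a_{i+1} in the paper is index i);
  sigma i = (i+1) mod A is the cyclic successor.
  A preference relation is a list t of length A over cmp; t!i compares a_i with a_(sigma i).\<close>

definition sigma :: "nat \<Rightarrow> nat \<Rightarrow> nat" where
  "sigma A i = Suc i mod A"

text \<open>Relation R (R x y meaning x is weakly preferred-or-equal, i.e. y \<preceq> x ... we use
  R x y = "x is at least as good as y") realizes comparison c between a and b.\<close>
definition realizes :: "(nat \<Rightarrow> nat \<Rightarrow> bool) \<Rightarrow> nat \<Rightarrow> nat \<Rightarrow> cmp \<Rightarrow> bool" where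
  "realizes R a b c = (case c of
       Zero \<Rightarrow> R b a \<and> \<not> R a b
     | One \<Rightarrow> R a b \<and> \<not> R b a
     | E \<Rightarrow> R a b \<and> R b a)"

definition weak_order_on :: "nat set \<Rightarrow> (nat \<Rightarrow> nat \<Rightarrow> bool) \<Rightarrow> bool" where
  "weak_order_on S R = ((\<forall>x\<in>S. \<forall>y\<in>S. R x y \<or> R y x) \<and>
                        (\<forall>x\<in>S. \<forall>y\<in>S. \<forall>z\<in>S. R x y \<longrightarrow> R y z \<longrightarrow> R x z))"

definition is_weak_order :: "nat \<Rightarrow> cmp list \<Rightarrow> bool" where
  "is_weak_order A t = (length t = A \<and>
     (\<exists>R. weak_order_on {..<A} R \<and> (\<forall>i<A. realizes R i (sigma A i) (t ! i))))"

text \<open>A profile in row form: list of A rows, each a list of length N; row j lists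
  all individuals' comparisons of a_j vs a_(sigma j). Every column is a weak order.\<close>
definition column :: "cmp list list \<Rightarrow> nat \<Rightarrow> cmp list" where
  "column m k = map (\<lambda>r. r ! k) m"

definition is_profile :: "nat \<Rightarrow> nat \<Rightarrow> cmp list list \<Rightarrow> bool" where
  "is_profile A N m = (length m = A \<and> (\<forall>r\<in>set m. length r = N) \<and>
                       (\<forall>k<N. is_weak_order A (column m k)))"

definition IIA :: "nat \<Rightarrow> nat \<Rightarrow> (cmp list list \<Rightarrow> cmp list) \<Rightarrow> (nat \<Rightarrow> cmp list \<Rightarrow> cmp) \<Rightarrow> bool" where
  "IIA A N w s = (\<forall>m. is_profile A N m \<longrightarrow> w m = map (\<lambda>j. s j (m ! j)) [0..<A])"

definition Unanimity :: "nat \<Rightarrow> nat \<Rightarrow> (nat \<Rightarrow> cmp list \<Rightarrow> cmp) \<Rightarrow> bool" where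
  "Unanimity A N s = (\<forall>j<A. \<forall>x\<in>{Zero, One}. s j (replicate N x) = x)"

definition Unrestricted_Domain :: "nat \<Rightarrow> nat \<Rightarrow> (cmp list list \<Rightarrow> cmp list) \<Rightarrow> bool" where
  "Unrestricted_Domain A N w = (\<forall>m. is_profile A N m \<longrightarrow> is_weak_order A (w m))"

end

theory Submission imports Defs begin

fun flip :: "cmp \<Rightarrow> cmp" where "flip Zero = One" | "flip One = Zero" | "flip E = E"

lemma sigma_alt: "i < A \<Longrightarrow> sigma A i = (if Suc i < A then Suc i else 0)"
proof -
  assume "i < A"
  then have "Suc i < A \<or> Suc i = A" by linarith
  then show ?thesis by (auto simp: sigma_def)
qed

lemma sigma_lt: "i < A \<Longrightarrow> sigma A i < A"
  by (simp add: sigma_def)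

lemma flip_wo: assumes "is_weak_order A t" shows "is_weak_order A (map flip t)"
proof -
  from assms obtain R where wo: "weak_order_on {..<A} R" and re: "\<forall>i<A. realizes R i (sigma A i) (t ! i)"
    and l: "length t = A" unfolding is_weak_order_def by blast
  have "weak_order_on {..<A} (\<lambda>x y. R y x)" using wo unfolding weak_order_on_def by blast
  moreover have "\<forall>i<A. realizes (\<lambda>x y. R y x) i (sigma A i) (map flip t ! i)"
  proof (intro allI impI)
    fix i assume "i < A"
    then show "realizes (\<lambda>x y. R y x) i (sigma A i) (map flip t ! i)"
      using re l by (cases "t ! i") (auto simp: realizes_def)
  qed
  ultimately show ?thesis using l unfolding is_weak_order_def by auto
qed

lemma no_wo:
  assumes l: "length t = A" and no: "\<forall>i<A. t!i \<noteq> One" and p: "p < A" and tp: "t!p = Zero"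
  shows "\<not> is_weak_order A t"
proof
  assume "is_weak_order A t"
  then obtain R where wo: "weak_order_on {..<A} R" and re: "\<forall>i<A. realizes R i (sigma A i) (t ! i)"
    unfolding is_weak_order_def by blast
  have step: "R (sigma A i) i" if "i < A" for i
    using re that no by (cases "t ! i") (auto simp: realizes_def)
  have tr: "\<And>x y z. x < A \<Longrightarrow> y < A \<Longrightarrow> z < A \<Longrightarrow> R x y \<Longrightarrow> R y z \<Longrightarrow> R x z"
    using wo unfolding weak_order_on_def by blast
  have refl: "\<And>x. x < A \<Longrightarrow> R x x" using wo unfolding weak_order_on_def by blast
  have ch: "R ((x + k) mod A) x" if "x < A" for x k
  proof (induction k)
    case 0 then show ?case using that refl by simp
  next
    case (Suc k)
    have A0: "A > 0" using that by simp
    have "(x + Suc k) mod A = sigma A ((x + k) mod A)"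
      unfolding sigma_def by (simp add: mod_Suc_eq)
    then have "R ((x + Suc k) mod A) ((x + k) mod A)" using step A0 by simp
    then show ?case using tr Suc A0 that by (meson mod_less_divisor)
  qed
  have A0: "A > 0" using p by simp
  have "sigma A p < A" using sigma_lt p .
  from ch[OF this, of "A - 1"]
  have "R ((sigma A p + (A - 1)) mod A) (sigma A p)" .
  moreover have "(sigma A p + (A - 1)) mod A = p"
  proof (cases "Suc p < A")
    case True
    then have "sigma A p + (A - 1) = p + A" unfolding sigma_alt[OF p] by simp
    then show ?thesis using p by simp
  next
    case False
    then have "p = A - 1" using p by simp
    then show ?thesis using False p unfolding sigma_alt[OF p] by simp
  qed
  ultimately have "R p (sigma A p)" by simp
  moreover have "\<not> R p (sigma A p)" using re p tp by (auto simp: realizes_def)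
  ultimately show False by simp
qed

lemma single_one:
  assumes p: "p < A" and A: "A \<ge> 2"
  shows "is_weak_order A (map (\<lambda>i. if i = p then One else Zero) [0..<A])"
proof -
  define v where "v i = (if i \<le> p then i + (A - Suc p) else i - Suc p)" for i
  define R where "R x y = (v y \<le> v x)" for x y
  have "weak_order_on {..<A} R" unfolding weak_order_on_def R_def by auto
  moreover have "realizes R i (sigma A i) (map (\<lambda>i. if i = p then One else Zero) [0..<A] ! i)"
    if i: "i < A" for i
    using i p A unfolding R_def v_def realizes_def sigma_alt[OF i] by auto
  moreover have "length (map (\<lambda>i. if i = p then One else Zero) [0..<A]) = A" by simp
  ultimately show ?thesis unfolding is_weak_order_def by blast
qed

theorem mainTheorem5:
  fixes A N :: nat
    and w :: "cmp list list \<Rightarrow> cmp list"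
    and s :: "nat \<Rightarrow> cmp list \<Rightarrow> cmp"
  assumes "A \<ge> 3" and "N \<ge> 2"
    and "IIA A N w s"
    and "Unanimity A N s"
    and "Unrestricted_Domain A N w"
  shows "\<forall>j<A. \<forall>r. length r = N \<and> set r \<subseteq> {Zero, One} \<longrightarrow> s j r \<in> {Zero, One}"
proof (intro allI impI)
  fix j r assume j: "j < A" and rr: "length r = N \<and> set r \<subseteq> {Zero, One}"
  have lr: "length r = N" and sr: "\<And>k. k < N \<Longrightarrow> r ! k \<in> {Zero, One}"
    using rr nth_mem by blast+
  show "s j r \<in> {Zero, One}"
  proof (rule ccontr)
    assume "s j r \<notin> {Zero, One}"
    then have sj: "s j r = E" by (cases "s j r") auto
    define j' where "j' = sigma A j"
    have j'A: "j' < A" using j sigma_lt j'_def by simp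
    have jj': "j' \<noteq> j" using j assms(1) unfolding j'_def sigma_alt[OF j] by auto
    obtain q where q: "q < A" "q \<noteq> j" "q \<noteq> j'"
    proof -
      have "\<not> {..<A} \<subseteq> {j, j'}"
      proof
        assume "{..<A} \<subseteq> {j, j'}"
        then have "card {..<A} \<le> card {j, j'}" by (intro card_mono) auto
        also have "\<dots> \<le> 2" by (simp add: card_insert_if)
        finally show False using assms(1) by simp
      qed
      then show ?thesis using that by auto
    qed
    define mk where "mk c = map (\<lambda>i. if i = j then r else if i = j' then map flip r else replicate N c) [0..<A]" for c
    have len: "length (mk c) = A" for c by (simp add: mk_def)
    have rows: "\<forall>x\<in>set (mk c). length x = N" for c using lr by (auto simp: mk_def)
    have mknth: "i < A \<Longrightarrow> mk c ! i = (if i = j then r else if i = j' then map flip r else replicate N c)" for c i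
      by (simp add: mk_def)
    have colnth: "column (mk c) k ! i = (if i = j then r ! k else if i = j' then flip (r ! k) else c)"
      if "i < A" "k < N" for c i k
      using that lr by (simp add: column_def len mknth)
    have len_col: "length (column (mk c) k) = A" for c k by (simp add: column_def len)
    have p0: "is_profile A N (mk Zero)"
      unfolding is_profile_def
    proof (intro conjI len rows allI impI)
      fix k assume k: "k < N"
      define p where "p = (if r ! k = One then j else j')"
      have "column (mk Zero) k = map (\<lambda>i. if i = p then One else Zero) [0..<A]"
        by (rule nth_equalityI) (use k sr[OF k] jj' in \<open>auto simp: len_col len colnth p_def\<close>)
      then show "is_weak_order A (column (mk Zero) k)"
        using single_one[of p A] assms(1) j j'A p_def by auto
    qed
    have p1: "is_profile A N (mk One)"
      unfolding is_profile_def
    proof (intro conjI len rows allI impI)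
      fix k assume k: "k < N"
      define p where "p = (if r ! k = Zero then j else j')"
      have "column (mk One) k = map flip (map (\<lambda>i. if i = p then One else Zero) [0..<A])"
        by (rule nth_equalityI) (use k sr[OF k] jj' in \<open>auto simp: len_col len colnth p_def\<close>)
      moreover have "is_weak_order A (map (\<lambda>i. if i = p then One else Zero) [0..<A])"
        using single_one[of p A] assms(1) j j'A p_def by auto
      ultimately show "is_weak_order A (column (mk One) k)"
        using flip_wo by metis
    qed
    have wm: "w (mk c) = map (\<lambda>i. s i (mk c ! i)) [0..<A]" if "is_profile A N (mk c)" for c
      using assms(3) that unfolding IIA_def by blast
    have un: "s i (replicate N c) = c" if "i < A" "c \<in> {Zero, One}" for i c
      using assms(4) that unfolding Unanimity_def by blast
    define x where "x = s j' (map flip r)"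
    have wnth: "w (mk c) ! i = (if i = j then E else if i = j' then x else c)"
      if "is_profile A N (mk c)" "i < A" "c \<in> {Zero, One}" for c i
      using that by (simp add: wm mknth sj x_def un)
    show False
    proof (cases "x = One")
      case False
      have "\<not> is_weak_order A (w (mk Zero))"
        by (rule no_wo[where p = q]) (use False q wnth[OF p0] in \<open>auto simp: wm[OF p0]\<close>)
      then show False using assms(5) p0 unfolding Unrestricted_Domain_def by blast
    next
      case True
      have "\<not> is_weak_order A (map flip (w (mk One)))"
        by (rule no_wo[where p = q]) (use True q wnth[OF p1] in \<open>auto simp: wm[OF p1]\<close>)
      then show False using assms(5) p1 flip_wo unfolding Unrestricted_Domain_def by blast
    qed
  qed
qed

end
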